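(* Let $k$ be a commutative ring, $P$ an invertible $k$-module, $Q=P^*$, and $A$ a $P$-Frobenius $k$-algebra. Suppose $(\phi,x_i,q_i,y_i)$ and $(\phi',x'_j,q'_j,y'_j)$ are two Frobenius systems for $A$ with Nakayama automorphisms $\nu,\nu'$. Then there is an invertible $d\in A$ such that $\phi'(a)=\phi(da)$ for all $a\in A$, \[ \sum_jx'_j\otimes q'_j\otimes y'_j=\sum_ix_i\otimes q_i\otimes d^{-1}y_i\quad\text{in }A\otimes_kQ\otimes_kA, \] and $\nu'(a)=d^{-1}\nu(a)d$ for all $a\in A$.
   Context: $P$ invertible means finitely generated projective of constant rank one. $A$ is $P$-Frobenius if it is finitely generated projective over $k$ and $A_A\cong\mathrm{Hom}_k(A,P)_A$, where $(\phi a)(x)=\phi(ax)$ and $(a\phi)(x)=\phi(xa)$. A Frobenius system $(\phi,x_i,q_i,y_i)$ consists of $\phi\in\mathrm{Hom}_k(A,P)$ (a Frobenius homomorphism, i.e. $a\mapsto\phi a$ is an isomorphism $A\to\mathrm{Hom}_k(A,P)$) and finitely many $x_i,y_i\in A$, $q_i\in Q$ with $\sum_ix_i\,q_i(\phi(y_ia))=a$ for all $a\in A$. Its Nakayama automorphism $\nu$ is the algebra automorphism with $\phi(xa)=\phi(\nu(a)x)$ for all $a,x\in A$. *)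

theory Defs
  imports Complex_Main "HOL-Library.Function_Algebras"
begin

definition k_algebra :: "('k::comm_ring_1 \<Rightarrow> 'a::ring_1 \<Rightarrow> 'a) \<Rightarrow> bool" where
  "k_algebra sA \<longleftrightarrow> module sA \<and>
     (\<forall>c x y. sA c (x * y) = sA c x * y \<and> sA c (x * y) = x * sA c y)"

text \<open>Finitely generated projective: a retract of a finite free module k^n
  (given by linear maps f_i : M \<rightarrow> k and elements e_i with m = sum f_i(m) e_i).\<close>
definition fg_projective :: "('k::comm_ring_1 \<Rightarrow> 'm::ab_group_add \<Rightarrow> 'm) \<Rightarrow> bool" where
  "fg_projective s \<longleftrightarrow> module s \<and>
     (\<exists>(n::nat) (e::nat \<Rightarrow> 'm) (f::nat \<Rightarrow> 'm \<Rightarrow> 'k).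
        (\<forall>i<n. module_hom s (*) (f i)) \<and> (\<forall>m. m = (\<Sum>i<n. s (f i m) (e i))))"

definition prime_ideal_k :: "'k::comm_ring_1 set \<Rightarrow> bool" where
  "prime_ideal_k I \<longleftrightarrow> 0 \<in> I \<and> (\<forall>a\<in>I. \<forall>b\<in>I. a + b \<in> I) \<and> (\<forall>a\<in>I. \<forall>r. r * a \<in> I)
     \<and> 1 \<notin> I \<and> (\<forall>a b. a * b \<in> I \<longrightarrow> a \<in> I \<or> b \<in> I)"

text \<open>The localization M_p is free of rank one over k_p (unfolded: some e/1 is a basis of M_p).\<close>
definition free_rank_one_at :: "('k::comm_ring_1 \<Rightarrow> 'm::ab_group_add \<Rightarrow> 'm) \<Rightarrow> 'k set \<Rightarrow> bool" where
  "free_rank_one_at s I \<longleftrightarrow> (\<exists>e.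
      (\<forall>m. \<exists>t. t \<notin> I \<and> (\<exists>c. s t m = s c e)) \<and>
      (\<forall>c. (\<exists>u. u \<notin> I \<and> s (u * c) e = 0) \<longrightarrow> (\<exists>u. u \<notin> I \<and> u * c = 0)))"

definition invertible_module :: "('k::comm_ring_1 \<Rightarrow> 'm::ab_group_add \<Rightarrow> 'm) \<Rightarrow> bool" where
  "invertible_module s \<longleftrightarrow> fg_projective s \<and> (\<forall>I. prime_ideal_k I \<longrightarrow> free_rank_one_at s I)"

definition dual :: "('k::comm_ring_1 \<Rightarrow> 'm::ab_group_add \<Rightarrow> 'm) \<Rightarrow> ('m \<Rightarrow> 'k) set" where
  "dual s = {q. module_hom s (*) q}"

definition dual_scale :: "'k::comm_ring_1 \<Rightarrow> ('m \<Rightarrow> 'k) \<Rightarrow> ('m \<Rightarrow> 'k)" where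
  "dual_scale c q = (\<lambda>p. c * q p)"

definition P_Frobenius :: "('k::comm_ring_1 \<Rightarrow> 'a::ring_1 \<Rightarrow> 'a) \<Rightarrow> ('k \<Rightarrow> 'p::ab_group_add \<Rightarrow> 'p) \<Rightarrow> bool" where
  "P_Frobenius sA sP \<longleftrightarrow> fg_projective sA \<and>
     (\<exists>F :: 'a \<Rightarrow> 'a \<Rightarrow> 'p.
        bij_betw F UNIV {f. module_hom sA sP f} \<and>
        (\<forall>a b x. F (a + b) x = F a x + F b x) \<and>
        (\<forall>a b x. F (a * b) x = F a (b * x)))"

definition frobenius_hom :: "('k::comm_ring_1 \<Rightarrow> 'a::ring_1 \<Rightarrow> 'a) \<Rightarrow> ('k \<Rightarrow> 'p::ab_group_add \<Rightarrow> 'p) \<Rightarrow> ('a \<Rightarrow> 'p) \<Rightarrow> bool" where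
  "frobenius_hom sA sP \<phi> \<longleftrightarrow> module_hom sA sP \<phi> \<and>
     bij_betw (\<lambda>a x. \<phi> (a * x)) UNIV {f. module_hom sA sP f}"

definition frobenius_system :: "('k::comm_ring_1 \<Rightarrow> 'a::ring_1 \<Rightarrow> 'a) \<Rightarrow> ('k \<Rightarrow> 'p::ab_group_add \<Rightarrow> 'p)
    \<Rightarrow> ('a \<Rightarrow> 'p) \<Rightarrow> nat \<Rightarrow> (nat \<Rightarrow> 'a) \<Rightarrow> (nat \<Rightarrow> 'p \<Rightarrow> 'k) \<Rightarrow> (nat \<Rightarrow> 'a) \<Rightarrow> bool" where
  "frobenius_system sA sP \<phi> n x q y \<longleftrightarrow> frobenius_hom sA sP \<phi> \<and>
     (\<forall>i<n. q i \<in> dual sP) \<and>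
     (\<forall>a. (\<Sum>i<n. sA (q i (\<phi> (y i * a))) (x i)) = a)"

definition nakayama_aut :: "('k::comm_ring_1 \<Rightarrow> 'a::ring_1 \<Rightarrow> 'a) \<Rightarrow> ('a \<Rightarrow> 'p) \<Rightarrow> ('a \<Rightarrow> 'a) \<Rightarrow> bool" where
  "nakayama_aut sA \<phi> \<nu> \<longleftrightarrow> bij \<nu> \<and>
     (\<forall>a b. \<nu> (a + b) = \<nu> a + \<nu> b) \<and> (\<forall>a b. \<nu> (a * b) = \<nu> a * \<nu> b) \<and> \<nu> 1 = 1 \<and>
     (\<forall>c a. \<nu> (sA c a) = sA c (\<nu> a)) \<and>
     (\<forall>a x. \<phi> (x * a) = \<phi> (\<nu> a * x))"

text \<open>Standard construction: the free k-module on M1 \<times> M2 \<times> M3 (finitely supported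
  functions to k) modulo the span of the trilinearity relations. The middle factor is given
  by a carrier set C2 (a submodule of the type 'q).\<close>

definition fscale :: "'k::comm_ring_1 \<Rightarrow> ('x \<Rightarrow> 'k) \<Rightarrow> ('x \<Rightarrow> 'k)" where
  "fscale c f = (\<lambda>t. c * f t)"

definition tdelta :: "'a \<Rightarrow> 'q \<Rightarrow> 'b \<Rightarrow> ('a \<times> 'q \<times> 'b \<Rightarrow> 'k::comm_ring_1)" where
  "tdelta a q b = (\<lambda>t. if t = (a, q, b) then 1 else 0)"

definition tensor3_rel ::
  "('k::comm_ring_1 \<Rightarrow> 'a::ab_group_add \<Rightarrow> 'a) \<Rightarrow> ('k \<Rightarrow> 'q::ab_group_add \<Rightarrow> 'q) \<Rightarrow> 'q set
   \<Rightarrow> ('k \<Rightarrow> 'b::ab_group_add \<Rightarrow> 'b) \<Rightarrow> ('a \<times> 'q \<times> 'b \<Rightarrow> 'k) set" where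
  "tensor3_rel s1 s2 C2 s3 =
     {tdelta (a + a') q b - tdelta a q b - tdelta a' q b | a a' q b. q \<in> C2} \<union>
     {tdelta (s1 c a) q b - fscale c (tdelta a q b) | c a q b. q \<in> C2} \<union>
     {tdelta a (q + q') b - tdelta a q b - tdelta a q' b | a q q' b. q \<in> C2 \<and> q' \<in> C2} \<union>
     {tdelta a (s2 c q) b - fscale c (tdelta a q b) | c a q b. q \<in> C2} \<union>
     {tdelta a q (b + b') - tdelta a q b - tdelta a q b' | a q b b'. q \<in> C2} \<union>
     {tdelta a q (s3 c b) - fscale c (tdelta a q b) | c a q b. q \<in> C2}"

definition tensor3_sum_eq ::
  "('k::comm_ring_1 \<Rightarrow> 'a::ab_group_add \<Rightarrow> 'a) \<Rightarrow> ('k \<Rightarrow> 'q::ab_group_add \<Rightarrow> 'q) \<Rightarrow> 'q set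
   \<Rightarrow> ('k \<Rightarrow> 'b::ab_group_add \<Rightarrow> 'b)
   \<Rightarrow> nat \<Rightarrow> (nat \<Rightarrow> 'a) \<Rightarrow> (nat \<Rightarrow> 'q) \<Rightarrow> (nat \<Rightarrow> 'b)
   \<Rightarrow> nat \<Rightarrow> (nat \<Rightarrow> 'a) \<Rightarrow> (nat \<Rightarrow> 'q) \<Rightarrow> (nat \<Rightarrow> 'b) \<Rightarrow> bool" where
  "tensor3_sum_eq s1 s2 C2 s3 m a q b n a' q' b' \<longleftrightarrow>
     (\<Sum>j<m. (tdelta (a j) (q j) (b j) :: 'a \<times> 'q \<times> 'b \<Rightarrow> 'k))
       - (\<Sum>i<n. tdelta (a' i) (q' i) (b' i))
     \<in> module.span (fscale :: 'k \<Rightarrow> ('a \<times> 'q \<times> 'b \<Rightarrow> 'k) \<Rightarrow> _) (tensor3_rel s1 s2 C2 s3)"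

end

theory Submission
  imports Defs
begin

definition kideal :: "'k::comm_ring_1 set \<Rightarrow> bool" where
  "kideal J \<longleftrightarrow> 0 \<in> J \<and> (\<forall>a\<in>J. \<forall>b\<in>J. a + b \<in> J) \<and> (\<forall>a\<in>J. \<forall>r. r * a \<in> J)"

lemma exists_prime:
  fixes J :: "'k::comm_ring_1 set"
  assumes J: "kideal J" "1 \<notin> J"
  shows "\<exists>I. prime_ideal_k I \<and> J \<subseteq> I"
proof -
  define AA where "AA = {I::'k set. kideal I \<and> J \<subseteq> I \<and> 1 \<notin> I}"
  have ne: "AA \<noteq> {}" using J unfolding AA_def by blast
  have ch: "\<Union>C \<in> AA" if Cne: "C \<noteq> {}" and "subset.chain AA C" for C
  proof -
    have CA: "C \<subseteq> AA" and lin: "\<forall>X\<in>C. \<forall>Y\<in>C. X \<subseteq> Y \<or> Y \<subseteq> X"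
      using that(2) unfolding subset_chain_def by auto
    have "kideal (\<Union>C)" unfolding kideal_def
    proof (intro conjI ballI allI)
      obtain X where "X \<in> C" using Cne by blast
      then show "0 \<in> \<Union>C" using CA unfolding AA_def kideal_def by blast
    next
      fix a b assume "a \<in> \<Union>C" "b \<in> \<Union>C"
      then obtain X Y where XY: "X \<in> C" "Y \<in> C" "a \<in> X" "b \<in> Y" by blast
      have XYA: "kideal X" "kideal Y" using XY CA unfolding AA_def by auto
      show "a + b \<in> \<Union>C"
      proof (cases "X \<subseteq> Y")
        case True
        then have "a + b \<in> Y" using XYA XY unfolding kideal_def by blast
        then show ?thesis using XY by blast
      next
        case False
        then have "Y \<subseteq> X" using lin XY by blast
        then have "a + b \<in> X" using XYA XY unfolding kideal_def by blast
        then show ?thesis using XY by blast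
      qed
    next
      fix a r assume "a \<in> \<Union>C"
      then obtain X where "X \<in> C" "a \<in> X" by blast
      then show "r * a \<in> \<Union>C" using CA unfolding AA_def kideal_def by blast
    qed
    moreover have "J \<subseteq> \<Union>C" using that(1) CA unfolding AA_def by blast
    moreover have "1 \<notin> \<Union>C" using CA unfolding AA_def by blast
    ultimately show ?thesis unfolding AA_def by blast
  qed
  obtain M where M: "M \<in> AA" and max: "\<forall>X\<in>AA. M \<subseteq> X \<longrightarrow> X = M"
    using subset_Zorn_nonempty[OF ne ch] by blast
  have Mi: "kideal M" "J \<subseteq> M" "1 \<notin> M" using M unfolding AA_def by auto
  have gen: "1 \<in> {m + r * a | m r. m \<in> M}" if "a \<notin> M" for a
  proof (rule ccontr)
    assume n1: "1 \<notin> {m + r * a | m r. m \<in> M}"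
    let ?X = "{m + r * a | m r. m \<in> M}"
    have "kideal ?X" unfolding kideal_def
    proof (intro conjI ballI allI)
      have "(0::'k) = 0 + 0 * a" "(0::'k) \<in> M" using Mi(1) unfolding kideal_def by simp_all
      then show "0 \<in> ?X" by blast
    next
      fix u v assume "u \<in> ?X" "v \<in> ?X"
      then obtain m1 r1 m2 r2 where "u = m1 + r1 * a" "v = m2 + r2 * a" "m1 \<in> M" "m2 \<in> M" by blast
      then have "u + v = (m1 + m2) + (r1 + r2) * a" "m1 + m2 \<in> M"
        using Mi(1) unfolding kideal_def by (auto simp: algebra_simps)
      then show "u + v \<in> ?X" by blast
    next
      fix u s assume "u \<in> ?X"
      then obtain m1 r1 where "u = m1 + r1 * a" "m1 \<in> M" by blast
      then have "s * u = (s * m1) + (s * r1) * a" "s * m1 \<in> M"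
        using Mi(1) unfolding kideal_def by (auto simp: algebra_simps)
      then show "s * u \<in> ?X" by blast
    qed
    moreover have MX: "M \<subseteq> ?X"
    proof
      fix u assume "u \<in> M"
      moreover have "u = u + 0 * a" by simp
      ultimately show "u \<in> ?X" by blast
    qed
    ultimately have "?X \<in> AA" using n1 Mi(2) unfolding AA_def by blast
    then have "?X = M" using max MX by blast
    moreover have "a \<in> ?X"
    proof -
      have "a = 0 + 1 * a" "(0::'k) \<in> M" using Mi(1) unfolding kideal_def by simp_all
      then show ?thesis by blast
    qed
    ultimately show False using that by blast
  qed
  have "prime_ideal_k M" unfolding prime_ideal_k_def
  proof (intro conjI allI impI)
    show "0 \<in> M" "\<forall>a\<in>M. \<forall>b\<in>M. a + b \<in> M" "\<forall>a\<in>M. \<forall>r. r * a \<in> M" "1 \<notin> M"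
      using Mi unfolding kideal_def by auto
  next
    fix a b assume ab: "a * b \<in> M"
    show "a \<in> M \<or> b \<in> M"
    proof (rule ccontr)
      assume "\<not> (a \<in> M \<or> b \<in> M)"
      then obtain m1 r m2 s where e: "1 = m1 + r * a" "1 = m2 + s * b" "m1 \<in> M" "m2 \<in> M"
        using gen by blast
      have p: "(1::'k) = (m1 + r * a) * (m2 + s * b)"
        by (simp only: e(1)[symmetric] e(2)[symmetric] mult_1)
      have id: "(m1 + r * a) * (m2 + s * b) = (m2 + s * b) * m1 + (r * a) * m2 + (r * s) * (a * b)"
        by (simp add: algebra_simps)
      have "(1::'k) = (m2 + s * b) * m1 + (r * a) * m2 + (r * s) * (a * b)"
        by (rule trans[OF p id])
      moreover have "(m2 + s * b) * m1 + (r * a) * m2 + (r * s) * (a * b) \<in> M"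
      proof -
        have c: "\<forall>a\<in>M. \<forall>b\<in>M. a + b \<in> M" "\<forall>a\<in>M. \<forall>r. r * a \<in> M"
          using Mi(1) unfolding kideal_def by auto
        have "(m2 + s * b) * m1 \<in> M" "(r * a) * m2 \<in> M" "(r * s) * (a * b) \<in> M"
          using c(2) e(3,4) ab by blast+
        then show ?thesis using c(1) by blast
      qed
      ultimately show False using Mi by simp
    qed
  qed
  then show ?thesis using Mi by blast
qed

lemma ac_k1: "(a::'k::comm_ring_1) * b * c = a * c * b" by (simp add: mult_ac)
lemma ac_k2: "(a::'k::comm_ring_1) * b * c = b * c * a" by (simp add: mult_ac)
lemma ac_k3: "(a::'k::comm_ring_1) * b * c = c * b * a" by (simp add: mult_ac)

lemma rank_one_swap:
  fixes s :: "'k::comm_ring_1 \<Rightarrow> 'm::ab_group_add \<Rightarrow> 'm"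
  assumes inv: "invertible_module s" and q: "module_hom s (*) q"
  shows "s (q p1) p2 = s (q p2) p1"
proof (rule ccontr)
  assume ne: "s (q p1) p2 \<noteq> s (q p2) p1"
  define z where "z = s (q p1) p2 - s (q p2) p1"
  have md: "module s" using inv unfolding invertible_module_def fg_projective_def by blast
  interpret module s by (rule md)
  interpret qh: module_hom s "(*)" q by (rule q)
  have z0: "z \<noteq> 0" using ne unfolding z_def by simp
  define J where "J = {t. s t z = 0}"
  have "kideal J" unfolding kideal_def J_def
  proof (intro conjI ballI allI)
    show "0 \<in> {t. s t z = 0}" by simp
  next
    fix a b assume "a \<in> {t. s t z = 0}" "b \<in> {t. s t z = 0}"
    then show "a + b \<in> {t. s t z = 0}" by (simp add: scale_left_distrib)
  next
    fix a r assume "a \<in> {t. s t z = 0}"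
    then have "s r (s a z) = 0" by simp
    then show "r * a \<in> {t. s t z = 0}" by (simp only: scale_scale mem_Collect_eq)
  qed
  moreover have "1 \<notin> J" using z0 unfolding J_def by simp
  ultimately obtain I where I: "prime_ideal_k I" "J \<subseteq> I" using exists_prime by blast
  have "free_rank_one_at s I" using inv I(1) unfolding invertible_module_def by blast
  then obtain e where e: "\<forall>m. \<exists>t. t \<notin> I \<and> (\<exists>c. s t m = s c e)"
    unfolding free_rank_one_at_def by blast
  obtain t1 c1 where t1: "t1 \<notin> I" "s t1 p1 = s c1 e" using e by blast
  obtain t2 c2 where t2: "t2 \<notin> I" "s t2 p2 = s c2 e" using e by blast
  have m1: "t1 * t2 * q p1 = t1 * q p1 * t2" "t1 * t2 * q p2 = t2 * q p2 * t1"
    by (rule ac_k1, rule ac_k2)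
  have m2: "c1 * q e * c2 = c2 * q e * c1" by (rule ac_k3)
  have "s (t1 * t2) z = s (t1 * t2 * q p1) p2 - s (t1 * t2 * q p2) p1"
    by (simp only: z_def scale_right_diff_distrib scale_scale)
  also have "\<dots> = s (q (s t1 p1)) (s t2 p2) - s (q (s t2 p2)) (s t1 p1)"
    by (simp only: qh.scale scale_scale m1)
  also have "\<dots> = s (c1 * q e * c2) e - s (c2 * q e * c1) e"
    by (simp only: t1(2) t2(2) qh.scale scale_scale)
  also have "\<dots> = 0" by (simp only: m2 diff_self)
  finally have "t1 * t2 \<in> I" using I(2) unfolding J_def by blast
  then show False using I(1) t1 t2 unfolding prime_ideal_k_def by blast
qed


lemma frob_inj:
  assumes "frobenius_hom sA sP \<phi>" "\<And>x. \<phi> (a * x) = \<phi> (b * x)"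
  shows "a = b"
proof -
  have "inj (\<lambda>a x. \<phi> (a * x))" using assms(1) unfolding frobenius_hom_def
    using bij_betw_imp_inj_on by blast
  moreover have "(\<lambda>x. \<phi> (a * x)) = (\<lambda>x. \<phi> (b * x))" using assms(2) by (rule ext)
  ultimately show ?thesis by (meson injD)
qed

lemma frob_surj:
  assumes "frobenius_hom sA sP \<phi>" "module_hom sA sP f"
  shows "\<exists>d. \<forall>x. f x = \<phi> (d * x)"
proof -
  have "(\<lambda>a x. \<phi> (a * x)) ` UNIV = {f. module_hom sA sP f}" using assms(1) unfolding frobenius_hom_def
    using bij_betw_imp_surj_on by blast
  then have "f \<in> (\<lambda>a x. \<phi> (a * x)) ` UNIV" using assms(2) by blast
  then obtain d where "f = (\<lambda>x. \<phi> (d * x))" by blast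
  then show ?thesis by auto
qed

lemma casimir_dual:
  fixes sA :: "'k::comm_ring_1 \<Rightarrow> 'a::ring_1 \<Rightarrow> 'a"
    and sP :: "'k \<Rightarrow> 'p::ab_group_add \<Rightarrow> 'p"
  assumes kA: "k_algebra sA" and inv: "invertible_module sP"
    and fs: "frobenius_system sA sP \<phi> m x q y"
  shows "(\<Sum>j<m. sA (q j (\<phi> (c * x j))) (y j)) = c"
proof -
  have fh: "frobenius_hom sA sP \<phi>" using fs unfolding frobenius_system_def by blast
  interpret ph: module_hom sA sP \<phi> using fh unfolding frobenius_hom_def by blast
  have qd: "\<And>j. j < m \<Longrightarrow> module_hom sP (*) (q j)" using fs unfolding frobenius_system_def dual_def by blast
  have sys: "\<And>a. (\<Sum>j<m. sA (q j (\<phi> (y j * a))) (x j)) = a" using fs unfolding frobenius_system_def by blast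
  have kl: "\<And>c u v. sA c (u * v) = sA c u * v"
    using kA unfolding k_algebra_def by blast
  have kr: "\<And>c u v. sA c (u * v) = u * sA c v"
    using kA unfolding k_algebra_def by blast
  let ?z = "\<Sum>j<m. sA (q j (\<phi> (c * x j))) (y j)"
  show ?thesis
  proof (rule frob_inj[OF fh])
    fix a
    have "?z * a = (\<Sum>j<m. sA (q j (\<phi> (c * x j))) (y j * a))"
      by (simp add: sum_distrib_right kl)
    then have "\<phi> (?z * a) = (\<Sum>j<m. sP (q j (\<phi> (c * x j))) (\<phi> (y j * a)))"
      by (simp add: ph.sum ph.scale)
    also have "\<dots> = (\<Sum>j<m. sP (q j (\<phi> (y j * a))) (\<phi> (c * x j)))"
      by (rule sum.cong[OF refl]) (rule rank_one_swap[OF inv qd], simp)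
    also have "\<dots> = \<phi> (c * (\<Sum>j<m. sA (q j (\<phi> (y j * a))) (x j)))"
      by (simp add: sum_distrib_left ph.sum ph.scale flip: kr)
    also have "\<dots> = \<phi> (c * a)" by (simp add: sys)
    finally show "\<phi> (?z * a) = \<phi> (c * a)" .
  qed
qed

lemma fscale_module: "module (fscale :: 'k::comm_ring_1 \<Rightarrow> ('x \<Rightarrow> 'k) \<Rightarrow> ('x \<Rightarrow> 'k))"
  by unfold_locales (auto simp: fscale_def fun_eq_iff algebra_simps)

context
  fixes sa :: "'k::comm_ring_1 \<Rightarrow> 'a::ab_group_add \<Rightarrow> 'a"
    and sq :: "'k \<Rightarrow> 'q::ab_group_add \<Rightarrow> 'q" and CC :: "'q set"
    and sb :: "'k \<Rightarrow> 'b::ab_group_add \<Rightarrow> 'b"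
begin

abbreviation SP where "SP \<equiv> module.span (fscale :: 'k \<Rightarrow> ('a \<times> 'q \<times> 'b \<Rightarrow> 'k) \<Rightarrow> _) (tensor3_rel sa sq CC sb)"

interpretation fm: module "fscale :: 'k \<Rightarrow> ('a \<times> 'q \<times> 'b \<Rightarrow> 'k) \<Rightarrow> _"
  by (rule fscale_module)

lemma t_sc1: "q \<in> CC \<Longrightarrow> tdelta (sa c a) q b - fscale c (tdelta a q b) \<in> SP"
  by (rule fm.span_base) (unfold tensor3_rel_def, fast)
lemma t_sc2: "q \<in> CC \<Longrightarrow> tdelta a (sq c q) b - fscale c (tdelta a q b) \<in> SP"
  by (rule fm.span_base) (unfold tensor3_rel_def, fast)
lemma t_sc3: "q \<in> CC \<Longrightarrow> tdelta a q (sb c b) - fscale c (tdelta a q b) \<in> SP"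
  by (rule fm.span_base) (unfold tensor3_rel_def, fast)
lemma t_add1: "q \<in> CC \<Longrightarrow> tdelta (a + a') q b - tdelta a q b - tdelta a' q b \<in> SP"
  by (rule fm.span_base) (unfold tensor3_rel_def, fast)
lemma t_add3: "q \<in> CC \<Longrightarrow> tdelta a q (b + b') - tdelta a q b - tdelta a q b' \<in> SP"
  by (rule fm.span_base) (unfold tensor3_rel_def, fast)

lemma eq_trans: "f - g \<in> SP \<Longrightarrow> g - h \<in> SP \<Longrightarrow> f - h \<in> SP"
  using fm.span_add[of "f - g" _ "g - h"] by simp

lemma eq_sum: "(\<And>i. i \<in> A \<Longrightarrow> f i - g i \<in> SP) \<Longrightarrow> sum f A - sum g A \<in> SP"
  using fm.span_sum[of A "\<lambda>i. f i - g i"] by (simp add: sum_subtractf)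

lemma t_sum1: "q \<in> CC \<Longrightarrow> tdelta (\<Sum>i<(n::nat). f i) q b - (\<Sum>i<n. tdelta (f i) q b) \<in> SP"
proof (induction n)
  case 0
  have "tdelta 0 q b - tdelta 0 q b - tdelta 0 q b \<in> SP" using t_add1[OF 0, of 0 0 b] by simp
  then have "- (tdelta 0 q b - tdelta 0 q b - tdelta 0 q b) \<in> SP" by (rule fm.span_neg)
  then show ?case by simp
next
  case (Suc n)
  have "tdelta (\<Sum>i<Suc n. f i) q b - (\<Sum>i<Suc n. tdelta (f i) q b) =
    (tdelta ((\<Sum>i<n. f i) + f n) q b - tdelta (\<Sum>i<n. f i) q b - tdelta (f n) q b)
    + (tdelta (\<Sum>i<n. f i) q b - (\<Sum>i<n. tdelta (f i) q b))" (is "_ = ?r") by simp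
  moreover have "?r \<in> SP" by (rule fm.span_add[OF t_add1[OF Suc.prems] Suc.IH[OF Suc.prems]])
  ultimately show ?case by metis
qed

lemma t_sum3: "q \<in> CC \<Longrightarrow> tdelta a q (\<Sum>i<(n::nat). f i) - (\<Sum>i<n. tdelta a q (f i)) \<in> SP"
proof (induction n)
  case 0
  have "tdelta a q 0 - tdelta a q 0 - tdelta a q 0 \<in> SP" using t_add3[OF 0, of a 0 0] by simp
  then have "- (tdelta a q 0 - tdelta a q 0 - tdelta a q 0) \<in> SP" by (rule fm.span_neg)
  then show ?case by simp
next
  case (Suc n)
  have "tdelta a q (\<Sum>i<Suc n. f i) - (\<Sum>i<Suc n. tdelta a q (f i)) =
    (tdelta a q ((\<Sum>i<n. f i) + f n) - tdelta a q (\<Sum>i<n. f i) - tdelta a q (f n))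
    + (tdelta a q (\<Sum>i<n. f i) - (\<Sum>i<n. tdelta a q (f i)))" (is "_ = ?r") by simp
  moreover have "?r \<in> SP" by (rule fm.span_add[OF t_add3[OF Suc.prems] Suc.IH[OF Suc.prems]])
  ultimately show ?case by metis
qed

end


theorem theorem2p7:
  fixes sA :: "'k::comm_ring_1 \<Rightarrow> 'a::ring_1 \<Rightarrow> 'a"
    and sP :: "'k \<Rightarrow> 'p::ab_group_add \<Rightarrow> 'p"
    and \<phi> \<phi>' :: "'a \<Rightarrow> 'p"
    and n m :: nat
    and x y x' y' :: "nat \<Rightarrow> 'a"
    and q q' :: "nat \<Rightarrow> 'p \<Rightarrow> 'k"
    and \<nu> \<nu>' :: "'a \<Rightarrow> 'a"
  assumes "k_algebra sA"
    and "invertible_module sP"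
    and "P_Frobenius sA sP"
    and "frobenius_system sA sP \<phi> n x q y"
    and "frobenius_system sA sP \<phi>' m x' q' y'"
    and "nakayama_aut sA \<phi> \<nu>"
    and "nakayama_aut sA \<phi>' \<nu>'"
  shows "\<exists>d dinv. d * dinv = 1 \<and> dinv * d = 1 \<and>
           (\<forall>a. \<phi>' a = \<phi> (d * a)) \<and>
           tensor3_sum_eq sA dual_scale (dual sP) sA m x' q' y' n x q (\<lambda>i. dinv * y i) \<and>
           (\<forall>a. \<nu>' a = dinv * \<nu> a * d)"
proof -
  note kA = assms(1) and inv = assms(2) and fs = assms(4) and fs' = assms(5)
  have fh: "frobenius_hom sA sP \<phi>" using fs unfolding frobenius_system_def by blast
  have fh': "frobenius_hom sA sP \<phi>'" using fs' unfolding frobenius_system_def by blast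
  obtain d where d: "\<And>a. \<phi>' a = \<phi> (d * a)"
    using frob_surj[OF fh, of \<phi>'] fh' unfolding frobenius_hom_def by blast
  obtain e where e: "\<And>a. \<phi> a = \<phi>' (e * a)"
    using frob_surj[OF fh', of \<phi>] fh unfolding frobenius_hom_def by blast
  have de: "d * e = 1"
    by (rule frob_inj[OF fh]) (simp add: mult.assoc flip: d e)
  have ed: "e * d = 1"
    by (rule frob_inj[OF fh']) (simp add: mult.assoc flip: d e)
  have nak: "\<nu>' a = e * \<nu> a * d" for a
  proof -
    have n1: "\<phi> (u * a) = \<phi> (\<nu> a * u)" for u using assms(6) unfolding nakayama_aut_def by blast
    have n2: "\<phi>' (u * a) = \<phi>' (\<nu>' a * u)" for u using assms(7) unfolding nakayama_aut_def by blast
    have "\<nu> a * d = d * \<nu>' a"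
    proof (rule frob_inj[OF fh])
      fix u
      have "\<phi> (\<nu> a * d * u) = \<phi> ((d * u) * a)" using n1[of "d * u"] by (simp add: mult.assoc)
      also have "\<dots> = \<phi>' (u * a)" by (simp add: d mult.assoc)
      also have "\<dots> = \<phi> (d * \<nu>' a * u)" using n2[of u] by (simp add: d mult.assoc)
      finally show "\<phi> (\<nu> a * d * u) = \<phi> (d * \<nu>' a * u)" .
    qed
    then have "e * \<nu> a * d = e * d * \<nu>' a" by (simp add: mult.assoc)
    then show ?thesis using ed by simp
  qed
  have qd: "\<And>i. i < n \<Longrightarrow> q i \<in> dual sP" using fs unfolding frobenius_system_def by blast
  have qd': "\<And>j. j < m \<Longrightarrow> q' j \<in> dual sP" using fs' unfolding frobenius_system_def by blast
  have sys: "\<And>a. (\<Sum>i<n. sA (q i (\<phi> (y i * a))) (x i)) = a" using fs unfolding frobenius_system_def by blast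
  define c where "c i j = q i (\<phi> (y i * x' j))" for i j
  define w where "w i j = q' j (\<phi> (y i * x' j))" for i j
  let ?T = "tdelta :: 'a \<Rightarrow> ('p \<Rightarrow> 'k) \<Rightarrow> 'a \<Rightarrow> ('a \<times> ('p \<Rightarrow> 'k) \<times> 'a \<Rightarrow> 'k)"
  let ?SP = "module.span (fscale :: 'k \<Rightarrow> ('a \<times> ('p \<Rightarrow> 'k) \<times> 'a \<Rightarrow> 'k) \<Rightarrow> _) (tensor3_rel sA dual_scale (dual sP) sA)"
  interpret fm: module "fscale :: 'k \<Rightarrow> ('a \<times> ('p \<Rightarrow> 'k) \<times> 'a \<Rightarrow> 'k) \<Rightarrow> _" by (rule fscale_module)
  have s1: "?T (x' j) (q' j) (y' j) - (\<Sum>i<n. fscale (c i j) (?T (x i) (q' j) (y' j))) \<in> ?SP"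
    if "j < m" for j
  proof -
    have eq: "(\<Sum>i<n. sA (c i j) (x i)) = x' j" using sys[of "x' j"] unfolding c_def by simp
    have "?T (\<Sum>i<n. sA (c i j) (x i)) (q' j) (y' j) - (\<Sum>i<n. ?T (sA (c i j) (x i)) (q' j) (y' j)) \<in> ?SP"
      by (rule t_sum1[where sa=sA and sq=dual_scale and CC="dual sP" and sb=sA, OF qd'[OF that]])
    then have "?T (x' j) (q' j) (y' j) - (\<Sum>i<n. ?T (sA (c i j) (x i)) (q' j) (y' j)) \<in> ?SP"
      by (simp only: eq)
    moreover have "(\<Sum>i<n. ?T (sA (c i j) (x i)) (q' j) (y' j)) - (\<Sum>i<n. fscale (c i j) (?T (x i) (q' j) (y' j))) \<in> ?SP"
      by (rule eq_sum, rule t_sc1, rule qd'[OF that])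
    ultimately show ?thesis by (rule eq_trans)
  qed
  have swap: "dual_scale (c i j) (q' j) = dual_scale (w i j) (q i)" if "i < n" "j < m" for i j
  proof -
    interpret qi: module_hom sP "(*)" "q i" using qd[OF that(1)] unfolding dual_def by blast
    show ?thesis unfolding dual_scale_def fun_eq_iff
    proof
      fix p
      have "sP (q' j (\<phi> (y i * x' j))) p = sP (q' j p) (\<phi> (y i * x' j))"
        by (rule rank_one_swap[OF inv]) (use qd'[OF that(2)] in \<open>simp add: dual_def\<close>)
      then have "q i (sP (q' j (\<phi> (y i * x' j))) p) = q i (sP (q' j p) (\<phi> (y i * x' j)))" by simp
      then show "c i j * q' j p = w i j * q i p" unfolding qi.scale c_def w_def by (metis mult.commute)
    qed
  qed
  have s2: "fscale (c i j) (?T (x i) (q' j) (y' j)) - fscale (w i j) (?T (x i) (q i) (y' j)) \<in> ?SP"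
    if "i < n" "j < m" for i j
  proof -
    have a: "?T (x i) (dual_scale (c i j) (q' j)) (y' j) - fscale (c i j) (?T (x i) (q' j) (y' j)) \<in> ?SP"
      by (rule t_sc2, rule qd'[OF that(2)])
    have b: "?T (x i) (dual_scale (c i j) (q' j)) (y' j) - fscale (w i j) (?T (x i) (q i) (y' j)) \<in> ?SP"
      unfolding swap[OF that] by (rule t_sc2, rule qd[OF that(1)])
    show ?thesis using fm.span_diff[OF b a] by simp
  qed
  have s3: "fscale (w i j) (?T (x i) (q i) (y' j)) - ?T (x i) (q i) (sA (w i j) (y' j)) \<in> ?SP"
    if "i < n" for i j
    using fm.span_neg[OF t_sc3[where sa=sA and sq=dual_scale and CC="dual sP" and sb=sA and c="w i j" and a="x i" and b="y' j", OF qd[OF that]]]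
    by simp
  have s4: "(\<Sum>j<m. ?T (x i) (q i) (sA (w i j) (y' j))) - ?T (x i) (q i) (e * y i) \<in> ?SP"
    if "i < n" for i
  proof -
    have eq: "(\<Sum>j<m. sA (w i j) (y' j)) = e * y i"
      using casimir_dual[OF kA inv fs', of "e * y i"] unfolding w_def by (simp add: e mult.assoc)
    have "?T (x i) (q i) (\<Sum>j<m. sA (w i j) (y' j)) - (\<Sum>j<m. ?T (x i) (q i) (sA (w i j) (y' j))) \<in> ?SP"
      by (rule t_sum3[where sa=sA and sq=dual_scale and CC="dual sP" and sb=sA, OF qd[OF that]])
    then have "?T (x i) (q i) (e * y i) - (\<Sum>j<m. ?T (x i) (q i) (sA (w i j) (y' j))) \<in> ?SP"
      by (simp only: eq)
    from fm.span_neg[OF this] show ?thesis by simp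
  qed
  have "(\<Sum>j<m. ?T (x' j) (q' j) (y' j)) - (\<Sum>j<m. \<Sum>i<n. fscale (c i j) (?T (x i) (q' j) (y' j))) \<in> ?SP"
    by (rule eq_sum) (rule s1, simp)
  moreover have "(\<Sum>j<m. \<Sum>i<n. fscale (c i j) (?T (x i) (q' j) (y' j))) - (\<Sum>j<m. \<Sum>i<n. fscale (w i j) (?T (x i) (q i) (y' j))) \<in> ?SP"
    by (rule eq_sum, rule eq_sum) (rule s2, simp_all)
  moreover have "(\<Sum>j<m. \<Sum>i<n. fscale (w i j) (?T (x i) (q i) (y' j))) - (\<Sum>j<m. \<Sum>i<n. ?T (x i) (q i) (sA (w i j) (y' j))) \<in> ?SP"
    by (rule eq_sum, rule eq_sum) (rule s3, simp_all)
  moreover have "(\<Sum>i<n. \<Sum>j<m. ?T (x i) (q i) (sA (w i j) (y' j))) - (\<Sum>i<n. ?T (x i) (q i) (e * y i)) \<in> ?SP"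
    by (rule eq_sum) (rule s4, simp)
  moreover have "(\<Sum>j<m. \<Sum>i<n. ?T (x i) (q i) (sA (w i j) (y' j))) = (\<Sum>i<n. \<Sum>j<m. ?T (x i) (q i) (sA (w i j) (y' j)))"
    by (rule sum.swap)
  ultimately have "(\<Sum>j<m. ?T (x' j) (q' j) (y' j)) - (\<Sum>i<n. ?T (x i) (q i) (e * y i)) \<in> ?SP"
    by (simp only:) (erule eq_trans, erule eq_trans, erule eq_trans, assumption)
  then have "tensor3_sum_eq sA dual_scale (dual sP) sA m x' q' y' n x q (\<lambda>i. e * y i)"
    unfolding tensor3_sum_eq_def by simp
  then show ?thesis using de ed d nak by blast
qed

end
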